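(* Let $G$ be a tricyclic graph with at least one pendant vertex whose base $\widetilde G$ consists of two distinct vertices $u,v$ joined by three internally vertex-disjoint paths, together with a cycle $C$ passing through $u$ that shares only the vertex $u$ with these three paths. Then $G\notin\mathscr{G}_{a,b}$ for all integers $a,b$.
   Context: All graphs are simple and connected; $d_G(v)$ is the degree of $v$, $N_G(v)$ its neighbourhood. A tricyclic graph is a connected graph with $|E_G|=|V_G|+2$. For integers $a,b$, $\mathscr{G}_{a,b}$ is the set of connected graphs $G$ such that for every $v\in V_G$, $\sum_{u\in N_G(v)}d_G(u)=a\,d_G(v)+b-d_G(v)^2$. A pendant vertex is a vertex of degree $1$. The base $\widetilde{G}$ of $G$ is the subgraph obtained from $G$ by repeatedly deleting pendant vertices until none remain. *)

theory Defs
  imports Main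
begin

definition simple_graph :: "'a set \<Rightarrow> 'a set set \<Rightarrow> bool" where
  "simple_graph V E \<longleftrightarrow> finite V \<and> (\<forall>e\<in>E. card e = 2 \<and> e \<subseteq> V)"

definition nbhd :: "'a set set \<Rightarrow> 'a \<Rightarrow> 'a set" where
  "nbhd E v = {u. {u, v} \<in> E}"

definition deg :: "'a set set \<Rightarrow> 'a \<Rightarrow> nat" where
  "deg E v = card (nbhd E v)"

definition connected_graph :: "'a set \<Rightarrow> 'a set set \<Rightarrow> bool" where
  "connected_graph V E \<longleftrightarrow> V \<noteq> {} \<and>
     (\<forall>x\<in>V. \<forall>y\<in>V. (x, y) \<in> {(p, q). {p, q} \<in> E}\<^sup>*)"

definition tricyclic :: "'a set \<Rightarrow> 'a set set \<Rightarrow> bool" where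
  "tricyclic V E \<longleftrightarrow> simple_graph V E \<and> connected_graph V E \<and> card E = card V + 2"

definition in_Gab :: "'a set \<Rightarrow> 'a set set \<Rightarrow> int \<Rightarrow> int \<Rightarrow> bool" where
  "in_Gab V E a b \<longleftrightarrow> simple_graph V E \<and> connected_graph V E \<and>
     (\<forall>v\<in>V. (\<Sum>u\<in>nbhd E v. int (deg E u)) = a * int (deg E v) + b - int (deg E v) ^ 2)"

definition pendant :: "'a set \<Rightarrow> 'a set set \<Rightarrow> 'a \<Rightarrow> bool" where
  "pendant V E x \<longleftrightarrow> x \<in> V \<and> deg E x = 1"

inductive prune_step :: "'a set \<times> 'a set set \<Rightarrow> 'a set \<times> 'a set set \<Rightarrow> bool" where
  "pendant V E x \<Longrightarrow> prune_step (V, E) (V - {x}, {e \<in> E. x \<notin> e})"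

definition is_base :: "'a set \<times> 'a set set \<Rightarrow> 'a set \<times> 'a set set \<Rightarrow> bool" where
  "is_base G H \<longleftrightarrow> prune_step\<^sup>*\<^sup>* G H \<and> (\<forall>x. \<not> pendant (fst H) (snd H) x)"

fun walk_edges :: "'a list \<Rightarrow> 'a set set" where
  "walk_edges (x # y # xs) = insert {x, y} (walk_edges (y # xs))"
| "walk_edges _ = {}"

definition path_list :: "'a \<Rightarrow> 'a \<Rightarrow> 'a list \<Rightarrow> bool" where
  "path_list u v p \<longleftrightarrow> distinct p \<and> length p \<ge> 2 \<and> hd p = u \<and> last p = v"

text \<open>c is a cycle (vertex sequence c_1..c_k, k \<ge> 3, closed by edge c_k c_1) starting at u.\<close>
definition cycle_list :: "'a \<Rightarrow> 'a list \<Rightarrow> bool" where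
  "cycle_list u c \<longleftrightarrow> distinct c \<and> length c \<ge> 3 \<and> hd c = u"

definition cycle_edges :: "'a list \<Rightarrow> 'a set set" where
  "cycle_edges c = insert {last c, hd c} (walk_edges c)"

definition theta_with_cycle_at_u :: "'a set \<Rightarrow> 'a set set \<Rightarrow> bool" where
  "theta_with_cycle_at_u W F \<longleftrightarrow>
    (\<exists>u v p1 p2 p3 c. u \<noteq> v \<and>
       path_list u v p1 \<and> path_list u v p2 \<and> path_list u v p3 \<and>
       p1 \<noteq> p2 \<and> p1 \<noteq> p3 \<and> p2 \<noteq> p3 \<and>
       set p1 \<inter> set p2 = {u, v} \<and> set p1 \<inter> set p3 = {u, v} \<and> set p2 \<inter> set p3 = {u, v} \<and>
       cycle_list u c \<and> set c \<inter> (set p1 \<union> set p2 \<union> set p3) = {u} \<and>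
       W = set p1 \<union> set p2 \<union> set p3 \<union> set c \<and>
       F = walk_edges p1 \<union> walk_edges p2 \<union> walk_edges p3 \<union> cycle_edges c)"

end

theory Submission
  imports Defs
begin



lemma sg_fin: "simple_graph V E \<Longrightarrow> finite V"
  by (simp add: simple_graph_def)

lemma sg_edge: "simple_graph V E \<Longrightarrow> {p,q} \<in> E \<Longrightarrow> p \<in> V \<and> q \<in> V \<and> p \<noteq> q"
proof -
  assume a: "simple_graph V E" "{p,q} \<in> E"
  then have "card {p,q} = 2" "{p,q} \<subseteq> V" by (auto simp: simple_graph_def)
  then show ?thesis by (cases "p = q") auto
qed

lemma sg_finE: "simple_graph V E \<Longrightarrow> finite E"
proof -
  assume a: "simple_graph V E"
  then have "E \<subseteq> Pow V" "finite V" by (auto simp: simple_graph_def)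
  then show ?thesis by (meson finite_Pow_iff finite_subset)
qed

lemma nbhd_sub: "simple_graph V E \<Longrightarrow> nbhd E v \<subseteq> V"
  unfolding nbhd_def using sg_edge by fastforce

lemma nbhd_fin: "simple_graph V E \<Longrightarrow> finite (nbhd E v)"
  using nbhd_sub sg_fin finite_subset by metis

lemma nbhd_sym: "u \<in> nbhd E v \<longleftrightarrow> v \<in> nbhd E u"
  unfolding nbhd_def by (simp add: insert_commute)

lemma nbhd_irr: "simple_graph V E \<Longrightarrow> v \<notin> nbhd E v"
  unfolding nbhd_def using sg_edge by fastforce

lemma prune_inv:
  assumes "prune_step\<^sup>*\<^sup>* (V,E) H" "simple_graph V E"
  shows "fst H \<subseteq> V \<and> snd H = {e\<in>E. e \<subseteq> fst H}"
  using assms(1)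
proof (induction rule: rtranclp_induct)
  case base
  then show ?case using assms(2) by (auto simp: simple_graph_def)
next
  case (step y z)
  from step(2) show ?case
  proof cases
    case (1 V' E' x)
    then show ?thesis using step(3) by auto
  qed
qed

lemma prune_keep:
  assumes "prune_step\<^sup>*\<^sup>* (V,E) H" "simple_graph V E" "X \<subseteq> V"
    "\<forall>x\<in>X. 2 \<le> card {q\<in>X. {q,x} \<in> E}"
  shows "X \<subseteq> fst H"
  using assms(1)
proof (induction rule: rtranclp_induct)
  case base
  then show ?case using assms(3) by simp
next
  case (step y z)
  from step(2) show ?case
  proof cases
    case (1 V' E' x)
    have inv: "E' = {e\<in>E. e \<subseteq> V'}" "V' \<subseteq> V" using prune_inv[OF step(1) assms(2)] 1 by auto
    have XV: "X \<subseteq> V'" using step(3) 1 by simp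
    have "x \<notin> X"
    proof
      assume xX: "x \<in> X"
      have sub: "{q\<in>X. {q,x} \<in> E} \<subseteq> nbhd E' x"
        using XV xX inv unfolding nbhd_def by auto
      have fin: "finite (nbhd E' x)"
        using nbhd_sub[OF assms(2), of x] inv unfolding nbhd_def
        by (metis (no_types, lifting) assms(2) finite_subset mem_Collect_eq sg_fin subsetI)
      have "card {q\<in>X. {q,x} \<in> E} \<le> 1" using card_mono[OF fin sub] 1 by (simp add: pendant_def deg_def)
      then show False using assms(4) xX by fastforce
    qed
    then show ?thesis using XV 1 by auto
  qed
qed

lemma walk_edges_conv: "walk_edges xs = {{xs!i, xs!Suc i} | i. Suc i < length xs}"
proof (induction xs rule: walk_edges.induct)
  case (1 x y xs)
  have "{{(x#y#xs)!i, (x#y#xs)!Suc i} | i. Suc i < length (x#y#xs)}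
      = insert {x,y} {{(y#xs)!i, (y#xs)!Suc i} | i. Suc i < length (y#xs)}"
    (is "?L = ?R")
  proof
    show "?L \<subseteq> ?R"
    proof
      fix e assume "e \<in> ?L"
      then obtain i where e: "e = {(x#y#xs)!i, (x#y#xs)!Suc i}" "Suc i < length (x#y#xs)" by blast
      show "e \<in> ?R"
      proof (cases i)
        case 0 then show ?thesis using e by simp
      next
        case (Suc j) then show ?thesis using e by auto
      qed
    qed
  next
    show "?R \<subseteq> ?L"
    proof
      fix e assume "e \<in> ?R"
      then consider "e = {x,y}" | j where "e = {(y#xs)!j, (y#xs)!Suc j}" "Suc j < length (y#xs)" by blast
      then show "e \<in> ?L"
      proof cases
        case 1 then show ?thesis by (auto intro!: exI[of _ 0])
      next
        case 2 then show ?thesis by (auto intro!: exI[of _ "Suc j"])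
      qed
    qed
  qed
  then show ?case using 1 by simp
qed auto

lemma walk_edges_mem: "{q,w} \<in> walk_edges xs \<Longrightarrow> w \<in> set xs \<and> q \<in> set xs"
  unfolding walk_edges_conv by (auto simp: doubleton_eq_iff)

lemma walk_nbrs:
  assumes "distinct xs" "i < length xs"
  shows "{q, xs!i} \<in> walk_edges xs \<longleftrightarrow> ((0 < i \<and> q = xs!(i-1)) \<or> (Suc i < length xs \<and> q = xs!Suc i))"
proof
  assume "{q, xs!i} \<in> walk_edges xs"
  then obtain j where j: "{q, xs!i} = {xs!j, xs!Suc j}" "Suc j < length xs" unfolding walk_edges_conv by blast
  then consider "q = xs!j" "xs!i = xs!Suc j" | "q = xs!Suc j" "xs!i = xs!j" by (auto simp: doubleton_eq_iff)
  then show "(0 < i \<and> q = xs!(i-1)) \<or> (Suc i < length xs \<and> q = xs!Suc i)"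
  proof cases
    case 1
    then have "i = Suc j" using nth_eq_iff_index_eq[OF assms(1) assms(2), of "Suc j"] j(2) by auto
    then show ?thesis using 1 by simp
  next
    case 2
    then have "i = j" using nth_eq_iff_index_eq[OF assms(1) assms(2), of j] j(2) by auto
    then show ?thesis using 2 j by simp
  qed
next
  assume "(0 < i \<and> q = xs!(i-1)) \<or> (Suc i < length xs \<and> q = xs!Suc i)"
  then show "{q, xs!i} \<in> walk_edges xs"
  proof
    assume h: "0 < i \<and> q = xs!(i-1)"
    then have "{q, xs!i} = {xs!(i-1), xs!Suc (i-1)}" by simp
    then show ?thesis unfolding walk_edges_conv using h assms(2) by fastforce
  next
    assume h: "Suc i < length xs \<and> q = xs!Suc i"
    then have "{q, xs!i} = {xs!i, xs!Suc i}" by auto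
    then show ?thesis unfolding walk_edges_conv using h by fastforce
  qed
qed

lemma walk_has_nbr: "w \<in> set xs \<Longrightarrow> 2 \<le> length xs \<Longrightarrow> \<exists>q. {q,w} \<in> walk_edges xs"
proof (induction xs rule: walk_edges.induct)
  case (1 x y xs)
  show ?case
  proof (cases "w = x")
    case True then show ?thesis by (auto simp: insert_commute)
  next
    case False
    then have "w \<in> set (y#xs)" using 1 by simp
    show ?thesis
    proof (cases "w = y")
      case True then show ?thesis by auto
    next
      case False
      then have "2 \<le> length (y#xs)" using \<open>w \<in> set (y#xs)\<close> by (cases xs) auto
      then show ?thesis using 1 \<open>w \<in> set (y#xs)\<close> by auto
    qed
  qed
qed auto




lemma dist_ne: "distinct xs \<Longrightarrow> i < length xs \<Longrightarrow> j < length xs \<Longrightarrow> i \<noteq> j \<Longrightarrow> xs!i \<noteq> xs!j"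
  by (simp add: nth_eq_iff_index_eq)

locale thc =
  fixes u v :: 'a and p1 p2 p3 c :: "'a list" and W :: "'a set" and F :: "'a set set"
  assumes uv: "u \<noteq> v"
  and pl: "path_list u v p1" "path_list u v p2" "path_list u v p3"
  and pd: "p1 \<noteq> p2" "p1 \<noteq> p3" "p2 \<noteq> p3"
  and pint: "set p1 \<inter> set p2 = {u,v}" "set p1 \<inter> set p3 = {u,v}" "set p2 \<inter> set p3 = {u,v}"
  and cl: "cycle_list u c" and ci: "set c \<inter> (set p1 \<union> set p2 \<union> set p3) = {u}"
  and Wd: "W = set p1 \<union> set p2 \<union> set p3 \<union> set c"
  and Fd: "F = walk_edges p1 \<union> walk_edges p2 \<union> walk_edges p3 \<union> cycle_edges c"
begin

definition "P = {p1,p2,p3}"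

lemma PP: "p \<in> P \<Longrightarrow> path_list u v p" using pl by (auto simp: P_def)
lemma Pint: "p \<in> P \<Longrightarrow> q \<in> P \<Longrightarrow> p \<noteq> q \<Longrightarrow> set p \<inter> set q = {u,v}"
  using pint by (auto simp: P_def)

lemma p_facts: assumes "p \<in> P"
  shows "distinct p" "2 \<le> length p" "p!0 = u" "p!(length p - 1) = v" "u \<in> set p" "v \<in> set p"
proof -
  have h: "distinct p" "2 \<le> length p" "hd p = u" "last p = v" using PP[OF assms] by (auto simp: path_list_def)
  have ne: "p \<noteq> []" using h by auto
  show "distinct p" "2 \<le> length p" using h by auto
  show "p!0 = u" using h hd_conv_nth[OF ne] by simp
  show "p!(length p - 1) = v" using h last_conv_nth[OF ne] by simp
  show "u \<in> set p" "v \<in> set p" using h hd_in_set[OF ne] last_in_set[OF ne] by auto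
qed

lemma Pc: "p \<in> P \<Longrightarrow> set c \<inter> set p = {u}" using ci p_facts(5)[of p] by (auto simp: P_def)

lemma c_facts: "distinct c" "3 \<le> length c" "c!0 = u" "last c = c!(length c - 1)" "u \<in> set c"
proof -
  have h: "distinct c" "3 \<le> length c" "hd c = u" using cl by (auto simp: cycle_list_def)
  have ne: "c \<noteq> []" using h by auto
  show "distinct c" "3 \<le> length c" using h by auto
  show "c!0 = u" using h hd_conv_nth[OF ne] by simp
  show "last c = c!(length c - 1)" using last_conv_nth[OF ne] by simp
  show "u \<in> set c" using h hd_in_set[OF ne] by auto
qed

lemma v_notin_c: "v \<notin> set c"
proof
  assume "v \<in> set c"
  then have "v \<in> set c \<inter> set p1" using p_facts[of p1] by (auto simp: P_def)
  then show False using Pc[of p1] uv by (auto simp: P_def)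
qed

lemma cyc_mem: "{q,w} \<in> cycle_edges c \<Longrightarrow> w \<in> set c \<and> q \<in> set c"
proof -
  assume a: "{q,w} \<in> cycle_edges c"
  have ne: "c \<noteq> []" using c_facts by auto
  show ?thesis
  proof (cases "{q,w} = {last c, hd c}")
    case True then show ?thesis using last_in_set[OF ne] hd_in_set[OF ne] by (auto simp: doubleton_eq_iff)
  next
    case False
    then have "{q,w} \<in> walk_edges c" using a by (simp add: cycle_edges_def)
    then show ?thesis by (rule walk_edges_mem)
  qed
qed

lemma F_iff: "{q,w} \<in> F \<longleftrightarrow> (\<exists>p\<in>P. {q,w} \<in> walk_edges p) \<or> {q,w} \<in> cycle_edges c"
  unfolding Fd P_def by auto

lemma path_int:
  assumes "p \<in> P" "0 < i" "Suc i < length p"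
  shows "{q, p!i} \<in> F \<longleftrightarrow> q = p!(i-1) \<or> q = p!Suc i"
proof -
  have d: "distinct p" and l: "p!0 = u" "p!(length p - 1) = v" using p_facts[OF assms(1)] by auto
  have w: "p!i \<in> set p" using assms by simp
  have l0: "0 < length p" using assms by linarith
  have "p!i \<noteq> p!0" using dist_ne[OF d _ l0, of i] assms by auto
  then have nu: "p!i \<noteq> u" using l by simp
  have nv: "p!i \<noteq> v" using dist_ne[OF d, of i "length p - 1"] assms l by auto
  have other: "{q, p!i} \<notin> walk_edges p'" if "p' \<in> P" "p' \<noteq> p" for p'
  proof
    assume "{q, p!i} \<in> walk_edges p'"
    then have "p!i \<in> set p'" by (rule walk_edges_mem[THEN conjunct1])
    then show False using Pint[OF assms(1) that(1)] that w nu nv by auto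
  qed
  have nc: "{q, p!i} \<notin> cycle_edges c"
  proof
    assume "{q, p!i} \<in> cycle_edges c"
    then have "p!i \<in> set c" using cyc_mem by simp
    then show False using Pc[OF assms(1)] w nu by auto
  qed
  have "{q, p!i} \<in> F \<longleftrightarrow> {q, p!i} \<in> walk_edges p" using F_iff other nc assms(1) by blast
  also have "\<dots> \<longleftrightarrow> q = p!(i-1) \<or> q = p!Suc i" using walk_nbrs[OF d, of i q] assms by auto
  finally show ?thesis .
qed

lemma cyc_int:
  assumes "0 < i" "i < length c"
  shows "{q, c!i} \<in> F \<longleftrightarrow> q = c!(i-1) \<or> (Suc i < length c \<and> q = c!Suc i) \<or> (Suc i = length c \<and> q = u)"
proof -
  have d: "distinct c" and l: "c!0 = u" "last c = c!(length c - 1)" "3 \<le> length c" using c_facts by auto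
  have w: "c!i \<in> set c" using assms by simp
  have l0: "0 < length c" using assms by linarith
  have "c!i \<noteq> c!0" using dist_ne[OF d _ l0, of i] assms by auto
  then have nu: "c!i \<noteq> u" using l by simp
  have np: "{q, c!i} \<notin> walk_edges p" if "p \<in> P" for p
  proof
    assume "{q, c!i} \<in> walk_edges p"
    then have "c!i \<in> set p" by (rule walk_edges_mem[THEN conjunct1])
    then show False using Pc[OF that] w nu by auto
  qed
  have "{q, c!i} \<in> F \<longleftrightarrow> {q, c!i} \<in> cycle_edges c" using F_iff np by blast
  also have "\<dots> \<longleftrightarrow> {q, c!i} = {last c, hd c} \<or> {q, c!i} \<in> walk_edges c" unfolding cycle_edges_def by simp
  also have "\<dots> \<longleftrightarrow> q = c!(i-1) \<or> (Suc i < length c \<and> q = c!Suc i) \<or> (Suc i = length c \<and> q = u)"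
  proof -
    have hd: "hd c = u" using cl by (simp add: cycle_list_def)
    have "{q, c!i} = {last c, hd c} \<longleftrightarrow> (Suc i = length c \<and> q = u)"
    proof
      assume "{q, c!i} = {last c, hd c}"
      then have "(q = last c \<and> c!i = u) \<or> (q = u \<and> c!i = last c)" using hd by (auto simp: doubleton_eq_iff)
      then have "q = u \<and> c!i = c!(length c - 1)" using nu l by auto
      then show "Suc i = length c \<and> q = u" using dist_ne[OF d, of i "length c - 1"] assms l by fastforce
    next
      assume "Suc i = length c \<and> q = u"
      then have "i = length c - 1" "q = u" by auto
      then show "{q, c!i} = {last c, hd c}" using l hd by (simp add: insert_commute)
    qed
    then show ?thesis using walk_nbrs[OF d assms(2), of q] assms by auto
  qed
  finally show ?thesis .
qed

lemma u_nbrs: "{q, u} \<in> F \<longleftrightarrow> q = p1!1 \<or> q = p2!1 \<or> q = p3!1 \<or> q = c!1 \<or> q = last c"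
proof -
  have pw: "{q, u} \<in> walk_edges p \<longleftrightarrow> q = p!1" if "p \<in> P" for p
  proof -
    have "0 < length p" using p_facts(2)[OF that] by linarith
    then show ?thesis using walk_nbrs[OF p_facts(1)[OF that], of 0 q] p_facts[OF that] by auto
  qed
  have d: "distinct c" and l: "c!0 = u" "last c = c!(length c - 1)" "3 \<le> length c" using c_facts by auto
  have hd: "hd c = u" using cl by (simp add: cycle_list_def)
  have "length c - 1 < length c" "0 < length c" "length c - 1 \<noteq> 0" using l by linarith+
  then have lnu: "last c \<noteq> u" using dist_ne[OF d, of "length c - 1" 0] l by auto
  have "{q, u} \<in> cycle_edges c \<longleftrightarrow> q = last c \<or> {q, c!0} \<in> walk_edges c"
    unfolding cycle_edges_def using hd lnu l by (auto simp: doubleton_eq_iff)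
  also have "\<dots> \<longleftrightarrow> q = last c \<or> q = c!1"
  proof -
    have "0 < length c" using l by linarith
    then show ?thesis using walk_nbrs[OF d, of 0 q] l by auto
  qed
  finally show ?thesis using F_iff pw by (auto simp: P_def)
qed

lemma v_nbrs: "{q, v} \<in> F \<longleftrightarrow> q = p1!(length p1 - 2) \<or> q = p2!(length p2 - 2) \<or> q = p3!(length p3 - 2)"
proof -
  have pw: "{q, v} \<in> walk_edges p \<longleftrightarrow> q = p!(length p - 2)" if "p \<in> P" for p
  proof -
    have "length p - 1 < length p" "0 < length p - 1" "length p - 1 - 1 = length p - 2" using p_facts[OF that] by auto
    then show ?thesis using walk_nbrs[OF p_facts(1)[OF that], of "length p - 1" q] p_facts[OF that] by auto
  qed
  have "{q, v} \<notin> cycle_edges c" using cyc_mem v_notin_c by blast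
  then show ?thesis using F_iff pw by (auto simp: P_def)
qed

lemma p1_ne: assumes "p \<in> P" "q \<in> P" "p \<noteq> q" shows "p!1 \<noteq> q!1"
proof
  assume e: "p!1 = q!1"
  have dp: "distinct p" "2 \<le> length p" "p!0 = u" "p!(length p - 1) = v" using p_facts[OF assms(1)] by auto
  have dq: "distinct q" "2 \<le> length q" "q!0 = u" "q!(length q - 1) = v" using p_facts[OF assms(2)] by auto
  have "p!1 \<in> set p" "q!1 \<in> set q" using dp dq by auto
  then have "p!1 \<in> set p \<inter> set q" using e by auto
  then have "p!1 = u \<or> p!1 = v" using Pint[OF assms] by auto
  moreover have "p!1 \<noteq> u"
  proof -
    have "1 < length p" "0 < length p" using dp by linarith+
    then show ?thesis using dist_ne[OF dp(1), of 1 0] dp by auto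
  qed
  moreover have "q!1 \<noteq> u"
  proof -
    have "1 < length q" "0 < length q" using dq by linarith+
    then show ?thesis using dist_ne[OF dq(1), of 1 0] dq by auto
  qed
  ultimately have v1: "p!1 = v" "q!1 = v" using e by auto
  have "length p = 2" using dist_ne[OF dp(1), of 1 "length p - 1"] dp v1 by fastforce
  moreover have "length q = 2" using dist_ne[OF dq(1), of 1 "length q - 1"] dq v1 by fastforce
  ultimately have "p = [u,v]" "q = [u,v]" using dp dq v1
    by (auto simp: list_eq_iff_nth_eq less_2_cases_iff)
  then show False using assms(3) by simp
qed

lemma pl_ne: assumes "p \<in> P" "q \<in> P" "p \<noteq> q" shows "p!(length p - 2) \<noteq> q!(length q - 2)"
proof
  assume e: "p!(length p - 2) = q!(length q - 2)"
  have dp: "distinct p" "2 \<le> length p" "p!0 = u" "p!(length p - 1) = v" using p_facts[OF assms(1)] by auto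
  have dq: "distinct q" "2 \<le> length q" "q!0 = u" "q!(length q - 1) = v" using p_facts[OF assms(2)] by auto
  have "p!(length p - 2) \<in> set p" "q!(length q - 2) \<in> set q" using dp dq by auto
  then have "p!(length p - 2) \<in> set p \<inter> set q" using e by auto
  then have "p!(length p - 2) = u \<or> p!(length p - 2) = v" using Pint[OF assms] by auto
  moreover have "p!(length p - 2) \<noteq> v" using dist_ne[OF dp(1), of "length p - 2" "length p - 1"] dp by auto
  moreover have "q!(length q - 2) \<noteq> v" using dist_ne[OF dq(1), of "length q - 2" "length q - 1"] dq by auto
  ultimately have v1: "p!(length p - 2) = u" "q!(length q - 2) = u" using e by auto
  have "length p = 2" using dist_ne[OF dp(1), of "length p - 2" 0] dp v1 by fastforce
  moreover have "length q = 2" using dist_ne[OF dq(1), of "length q - 2" 0] dq v1 by fastforce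
  ultimately have "p = [u,v]" "q = [u,v]" using dp dq v1
    by (auto simp: list_eq_iff_nth_eq less_2_cases_iff)
  then show False using assms(3) by simp
qed

lemma W_has_nbr: "w \<in> W \<Longrightarrow> \<exists>q. {q,w} \<in> F"
proof -
  assume "w \<in> W"
  then consider p where "p \<in> P" "w \<in> set p" | "w \<in> set c" unfolding Wd P_def by auto
  then show ?thesis
  proof cases
    case 1 then show ?thesis using walk_has_nbr[of w p] p_facts[OF 1(1)] F_iff by blast
  next
    case 2
    have "{q,w} \<in> walk_edges c \<Longrightarrow> {q,w} \<in> F" for q unfolding Fd cycle_edges_def by auto
    then show ?thesis using walk_has_nbr[of w c] c_facts 2 by fastforce
  qed
qed

end



lemma walk_cons: "xs \<noteq> [] \<Longrightarrow> walk_edges (x # xs) = insert {x, hd xs} (walk_edges xs)"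
  by (cases xs) auto

lemma walk_snoc: "walk_edges (xs @ [y]) = (if xs = [] then {} else insert {last xs, y} (walk_edges xs))"
proof (induction xs)
  case (Cons x xs)
  show ?case
  proof (cases "xs = []")
    case True then show ?thesis by simp
  next
    case False
    have "walk_edges ((x#xs) @ [y]) = insert {x, hd xs} (walk_edges (xs @ [y]))"
      using walk_cons[of "xs @ [y]" x] False by simp
    also have "\<dots> = insert {x, hd xs} (insert {last xs, y} (walk_edges xs))" using Cons False by simp
    also have "\<dots> = insert {last (x#xs), y} (walk_edges (x#xs))" using walk_cons[OF False, of x] False
      by (simp add: insert_commute)
    finally show ?thesis by simp
  qed
qed simp

lemma walk_rev: "walk_edges (rev xs) = walk_edges xs"
proof (induction xs)
  case (Cons x xs)
  show ?case
  proof (cases "xs = []")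
    case True then show ?thesis by simp
  next
    case False
    have "walk_edges (rev (x#xs)) = insert {last (rev xs), x} (walk_edges (rev xs))"
      using walk_snoc[of "rev xs" x] False by simp
    also have "\<dots> = insert {x, hd xs} (walk_edges xs)" using Cons False by (simp add: last_rev insert_commute)
    also have "\<dots> = walk_edges (x#xs)" using walk_cons[OF False] by simp
    finally show ?thesis .
  qed
qed simp

context thc begin

lemma rev_thc: "thc u v p1 p2 p3 (u # rev (tl c)) W F"
proof -
  have ne: "c \<noteq> []" using c_facts by auto
  have hd: "hd c = u" using cl by (simp add: cycle_list_def)
  have ceq: "c = u # tl c" using ne hd by (cases c) auto
  define t where "t = tl c"
  have tl2: "2 \<le> length t" using c_facts t_def by auto
  have tne: "t \<noteq> []" using tl2 by auto
  have dt: "distinct (u # t)" using c_facts(1) ceq unfolding t_def by simp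
  have cl': "cycle_list u (u # rev t)" using dt tl2 by (auto simp: cycle_list_def)
  have sc: "set (u # rev t) = set c" using ceq unfolding t_def by (metis set_rev list.simps(15))
  have "cycle_edges (u # rev t) = insert {hd t, u} (insert {u, last t} (walk_edges t))"
    unfolding cycle_edges_def using tne walk_cons[of "rev t" u] walk_rev[of t]
    by (simp add: last_rev hd_rev)
  also have "\<dots> = cycle_edges c"
  proof -
    have "last c = last t" using ceq tne unfolding t_def by (metis last_ConsR)
    moreover have "walk_edges c = insert {u, hd t} (walk_edges t)" using walk_cons[OF tne, of u] ceq unfolding t_def by simp
    ultimately show ?thesis unfolding cycle_edges_def using hd by (simp add: insert_commute)
  qed
  finally have ce: "cycle_edges (u # rev t) = cycle_edges c" .
  show ?thesis
    apply unfold_locales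
    using uv pl pd pint cl' ci sc Wd Fd ce t_def by auto
qed

lemma u_nbhd: "nbhd F u = {p1!1, p2!1, p3!1, c!1, last c}"
  unfolding nbhd_def using u_nbrs by auto

lemma v_nbhd: "nbhd F v = {p1!(length p1 - 2), p2!(length p2 - 2), p3!(length p3 - 2)}"
  unfolding nbhd_def using v_nbrs by auto

lemma path_nbhd: "p \<in> P \<Longrightarrow> 0 < i \<Longrightarrow> Suc i < length p \<Longrightarrow> nbhd F (p!i) = {p!(i-1), p!Suc i}"
  unfolding nbhd_def using path_int by auto

lemma cyc_nbhd: "0 < i \<Longrightarrow> i < length c \<Longrightarrow>
   nbhd F (c!i) = {c!(i-1), if Suc i < length c then c!Suc i else u}"
  unfolding nbhd_def using cyc_int by auto

lemma PinP: "p1 \<in> P" "p2 \<in> P" "p3 \<in> P" by (auto simp: P_def)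

lemma u_nbr_facts:
  "distinct [p1!1, p2!1, p3!1, c!1, last c]"
  "set [p1!1, p2!1, p3!1, c!1, last c] \<subseteq> W"
proof -
  have d: "distinct c" and l: "c!0 = u" "last c = c!(length c - 1)" "3 \<le> length c" using c_facts by auto
  have c1: "c!1 \<in> set c" "last c \<in> set c" using l by auto
  have c1u: "c!1 \<noteq> u" "last c \<noteq> u" "c!1 \<noteq> last c"
  proof -
    have "1 < length c" "0 < length c" "length c - 1 < length c" "length c - 1 \<noteq> 0" "length c - 1 \<noteq> 1" using l by linarith+
    then show "c!1 \<noteq> u" "last c \<noteq> u" "c!1 \<noteq> last c" using dist_ne[OF d] l by auto
  qed
  have cp: "x \<noteq> p!1" if "x \<in> set c" "x \<noteq> u" "p \<in> P" for x p
  proof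
    assume "x = p!1"
    then have "x \<in> set p" using p_facts[OF that(3)] by auto
    then show False using Pc[OF that(3)] that by auto
  qed
  show "distinct [p1!1, p2!1, p3!1, c!1, last c]"
    using p1_ne[OF PinP(1) PinP(2)] p1_ne[OF PinP(1) PinP(3)] p1_ne[OF PinP(2) PinP(3)] pd
      cp[OF c1(1) c1u(1) PinP(1)] cp[OF c1(2) c1u(2) PinP(1)]
      cp[OF c1(1) c1u(1) PinP(2)] cp[OF c1(2) c1u(2) PinP(2)]
      cp[OF c1(1) c1u(1) PinP(3)] cp[OF c1(2) c1u(2) PinP(3)] c1u(3) by auto
  have "p!1 \<in> set p" if "p \<in> P" for p using p_facts(2)[OF that] by simp
  then show "set [p1!1, p2!1, p3!1, c!1, last c] \<subseteq> W"
    using PinP c1 unfolding Wd by auto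
qed

lemma v_nbr_facts:
  "distinct [p1!(length p1 - 2), p2!(length p2 - 2), p3!(length p3 - 2)]"
  "set [p1!(length p1 - 2), p2!(length p2 - 2), p3!(length p3 - 2)] \<subseteq> W"
proof -
  show "distinct [p1!(length p1 - 2), p2!(length p2 - 2), p3!(length p3 - 2)]"
    using pl_ne[OF PinP(1) PinP(2)] pl_ne[OF PinP(1) PinP(3)] pl_ne[OF PinP(2) PinP(3)] pd by auto
  have "p!(length p - 2) \<in> set p" if "p \<in> P" for p using p_facts(2)[OF that] by simp
  then show "set [p1!(length p1 - 2), p2!(length p2 - 2), p3!(length p3 - 2)] \<subseteq> W"
    using PinP unfolding Wd by auto
qed

lemma path_nbr_facts: assumes "p \<in> P" "0 < i" "Suc i < length p"
  shows "p!(i-1) \<noteq> p!Suc i" "p!(i-1) \<in> W" "p!Suc i \<in> W" "p!i \<in> W"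
proof -
  have d: "distinct p" using p_facts[OF assms(1)] by auto
  show "p!(i-1) \<noteq> p!Suc i" using dist_ne[OF d, of "i-1" "Suc i"] assms by auto
  have "set p \<subseteq> W" using assms(1) unfolding Wd P_def by auto
  then show "p!(i-1) \<in> W" "p!Suc i \<in> W" "p!i \<in> W" using assms by auto
qed

lemma cyc_nbr_facts: assumes "0 < i" "i < length c"
  shows "c!(i-1) \<noteq> (if Suc i < length c then c!Suc i else u)" "c!(i-1) \<in> W"
    "(if Suc i < length c then c!Suc i else u) \<in> W" "c!i \<in> W" "c!i \<noteq> u" "c!i \<noteq> v"
proof -
  have d: "distinct c" and l: "c!0 = u" "3 \<le> length c" using c_facts by auto
  show "c!(i-1) \<noteq> (if Suc i < length c then c!Suc i else u)"
  proof (cases "Suc i < length c")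
    case True then show ?thesis using dist_ne[OF d, of "i-1" "Suc i"] assms by auto
  next
    case False
    then have "i - 1 \<noteq> 0" "i - 1 < length c" "0 < length c" using assms l by linarith+
    then show ?thesis using dist_ne[OF d, of "i-1" 0] assms l False by auto
  qed
  have "set c \<subseteq> W" unfolding Wd by auto
  then show "c!(i-1) \<in> W" "(if Suc i < length c then c!Suc i else u) \<in> W" "c!i \<in> W"
    using assms c_facts by auto
  have "0 < length c" using l by linarith
  then show "c!i \<noteq> u" using dist_ne[OF d, of i 0] assms l by auto
  show "c!i \<noteq> v" using v_notin_c assms by auto
qed

end



lemma caseA_arith:
  fixes a b k D R :: int
  assumes k2: "k \<ge> 2" and kd: "k = a + b - 1" and ey: "(k-1) + D = a*k + b - k^2"
    and ez: "k + R = a*D + b - D^2" and RD: "R \<ge> D - 1" and D1: "D \<ge> 1"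
  shows "R = D - 1"
proof -
  define t where "t = a - k - 1"
  have bb: "b = k + 1 - a" using kd by simp
  have e1: "D - 1 = (k-1)*t" using ey unfolding bb t_def power2_eq_square by (simp add: algebra_simps)
  have e2: "R = (D-1)*(a-D-1)" using ez unfolding bb power2_eq_square by (simp add: algebra_simps)
  show ?thesis
  proof (cases "D = 1")
    case True then show ?thesis using e2 by simp
  next
    case False
    then have Dp: "D - 1 > 0" using D1 by simp
    have "(D-1)*(a-D-1) \<ge> (D-1)*1" using RD e2 by simp
    then have aD: "a - D - 1 \<ge> 1" using Dp by (simp add: mult_le_cancel_left)
    have tp: "t \<ge> 1"
    proof (rule ccontr)
      assume "\<not> t \<ge> 1"
      then have "t \<le> 0" by simp
      then have "(k-1)*t \<le> 0" using k2 by (simp add: mult_nonneg_nonpos)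
      then show False using e1 Dp by simp
    qed
    have "(k-2)*(t-1) \<le> 0" using aD e1 unfolding t_def by (simp add: algebra_simps)
    moreover have "(k-2)*(t-1) \<ge> 0" using k2 tp by simp
    ultimately have "(k-2)*(t-1) = 0" by simp
    then have "k = 2 \<or> t = 1" by simp
    then show ?thesis
    proof
      assume "k = 2"
      then have "D - 1 = t" using e1 by simp
      then show ?thesis using e2 unfolding t_def using \<open>k = 2\<close> by simp
    next
      assume "t = 1"
      then have "D = k" using e1 by simp
      then show ?thesis using e2 \<open>t = 1\<close> unfolding t_def by simp
    qed
  qed
qed

lemma VE_form:
  fixes a b K t s D l beta :: int
  assumes "K = a + b - 1" "t = a - K - 1" "D = beta + l" "l \<ge> 0" "s + l = a*D + b - D^2" "l > 0 \<longrightarrow> D = K"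
  shows "(D = beta \<and> s = a*beta + b - beta^2) \<or> (D = K \<and> K > beta \<and> s = t*K - t + beta)"
proof (cases "l = 0")
  case True then show ?thesis using assms by simp
next
  case False
  then have "D = K" "K > beta" using assms by auto
  moreover have "s = t*K - t + beta"
  proof -
    have bt: "b = -t" using assms(1,2) by simp
    have at: "a = K + 1 + t" using assms(1,2) by simp
    have l: "l = K - beta" using assms(3) \<open>D = K\<close> by simp
    have "s = a*K + b - K*K - l" using assms(5) \<open>D = K\<close> unfolding power2_eq_square by simp
    then have "s = (K + 1 + t)*K + (-t) - K*K - (K - beta)" using bt at l by simp
    then show ?thesis by (simp add: algebra_simps)
  qed
  ultimately show ?thesis by simp
qed

lemma cycle_arith:
  fixes K t du d1 d2 dz X dL :: int
  assumes K3: "K \<ge> 3" and t1: "t \<ge> 1"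
    and c1: "(d1 = 2 \<and> du + d2 = 2*K + t - 2) \<or> (d1 = K \<and> du + d2 = t*K - t + 2)"
    and c2: "(d2 = 2 \<and> d1 + dz = 2*K + t - 2) \<or> (d2 = K \<and> d1 + dz = t*K - t + 2)"
    and u: "(du = 5 \<and> d1 + dL + X = 5*K + 4*t - 20) \<or> (du = K \<and> K > 5 \<and> d1 + dL + X = t*K - t + 5)"
    and dL: "dL \<ge> 2" and X: "X \<ge> 6"
    and z: "(dz = du \<and> L3) \<or> dz = 2 \<or> dz = K"
  shows "(t = 2 \<and> du = K \<and> d1 = K) \<or> (L3 \<and> K = 6 \<and> t = 1 \<and> du = 5 \<and> d1 + d2 = 8)"
proof -
  have Km1: "K - 1 > 0" using K3 by simp
  have cancel: "t = c" if "(K-1)*t = (K-1)*c" for c using that Km1 by simp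
  consider "d1 = 2" "d2 = 2" | "d1 = K" "d2 = K" | "d1 = 2" "d2 = K" "K \<noteq> 2" | "d1 = K" "d2 = 2" "K \<noteq> 2"
    using c1 c2 K3 by auto
  then show ?thesis
  proof cases
    case 1
    then have e: "du = 2*K + t - 4" "dz = du" using c1 c2 K3 by auto
    from u show ?thesis
    proof
      assume h: "du = 5 \<and> d1 + dL + X = 5*K + 4*t - 20"
      then show ?thesis using e 1 dL X K3 by linarith
    next
      assume h: "du = K \<and> K > 5 \<and> d1 + dL + X = t*K - t + 5"
      then show ?thesis using e t1 by linarith
    qed
  next
    case 2
    then have e: "du + K = t*K - t + 2" "dz = du" using c1 c2 K3 by auto
    from u show ?thesis
    proof
      assume h: "du = 5 \<and> d1 + dL + X = 5*K + 4*t - 20"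
      then have e3: "(K-1)*t = K + 3" using e by (simp add: algebra_simps)
      have s7: "K + t \<ge> 7" using h 2 dL X by linarith
      have "t = 2"
      proof (rule ccontr)
        assume "t \<noteq> 2"
        moreover have "t \<noteq> 1" using e3 by (auto simp: algebra_simps)
        ultimately have t3: "t \<ge> 3" using t1 by simp
        then have "(K-1)*3 \<le> (K-1)*t" using Km1 by (intro mult_left_mono) auto
        then have "K \<le> 3" using e3 by simp
        then have "K = 3" using K3 by simp
        then show False using e3 s7 by simp
      qed
      then have "K = 5" using e3 by simp
      then show ?thesis using h 2 \<open>t = 2\<close> by simp
    next
      assume h: "du = K \<and> K > 5 \<and> d1 + dL + X = t*K - t + 5"
      then have "(K-1)*t = (K-1)*2" using e by (simp add: algebra_simps)
      then have "t = 2" by (rule cancel)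
      then show ?thesis using h 2 by simp
    qed
  next
    case 3
    then have e: "du = K + t - 2" "dz = (K-1)*t" using c1 c2 by (auto simp: algebra_simps)
    from z consider "dz = du" "L3" | "dz = 2" | "dz = K" by auto
    then show ?thesis
    proof cases
      case 1
      then have "(K-2)*(t-1) = 0" using e by (simp add: algebra_simps)
      then have "t = 1" using K3 by simp
      then have "du = K - 1" using e by simp
      then have "du = 5" "K = 6" using u by auto
      then show ?thesis using 1 3 \<open>t = 1\<close> by simp
    next
      case 2
      then have "(K-1)*t = 2" using e by simp
      moreover have "(K-1)*1 \<le> (K-1)*t" using t1 Km1 by (intro mult_left_mono) auto
      ultimately have "K = 3" "t = 1" using K3 by (auto simp: algebra_simps)
      then show ?thesis using e u by simp
    next
      case 3
      then have "(K-1)*t = K" using e by simp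
      then show ?thesis
      proof (cases "t = 1")
        case True then show ?thesis using \<open>(K-1)*t = K\<close> by simp
      next
        case False
        then have "(K-1)*2 \<le> (K-1)*t" using t1 Km1 by (intro mult_left_mono) auto
        then show ?thesis using \<open>(K-1)*t = K\<close> K3 by simp
      qed
    qed
  next
    case 4
    then have e: "du = (K-1)*t" "dz = K + t - 2" using c1 c2 by (auto simp: algebra_simps)
    from z consider "dz = du" "L3" | "dz = 2" | "dz = K" by auto
    then show ?thesis
    proof cases
      case 1
      then have "(K-2)*(t-1) = 0" using e by (simp add: algebra_simps)
      then have "t = 1" using K3 by simp
      then have "du = K - 1" using e by simp
      then have "du = 5" "K = 6" using u by auto
      then show ?thesis using 1 4 \<open>t = 1\<close> by simp
    next
      case 2
      then have "K = 3" "t = 1" using e K3 t1 by auto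
      then show ?thesis using e u by simp
    next
      case 3
      then have "t = 2" using e by simp
      then have "du = 2*K - 2" using e by (simp add: algebra_simps)
      moreover have "du = 5 \<or> du = K" using u by auto
      ultimately have False using K3 by presburger
      then show ?thesis by simp
    qed
  qed
qed




lemma sum_all_one:
  fixes f :: "'b \<Rightarrow> int"
  assumes "finite A" "\<forall>q\<in>A. f q \<ge> 1" "sum f A = int (card A)"
  shows "\<forall>q\<in>A. f q = 1"
proof -
  have "sum (\<lambda>q. f q - 1) A = 0" using assms by (simp add: sum_subtractf)
  moreover have nn: "\<And>q. q \<in> A \<Longrightarrow> f q - 1 \<ge> 0" using assms by auto
  ultimately have "\<forall>q\<in>A. f q - 1 = 0" using sum_nonneg_eq_0_iff[OF assms(1), of "\<lambda>q. f q - 1"] by simp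
  then show ?thesis by auto
qed

lemma closed_reach:
  assumes "connected_graph V E" "x \<in> S" "\<forall>p\<in>S. \<forall>q. {p,q} \<in> E \<longrightarrow> q \<in> S" "x \<in> V" "y \<in> V"
  shows "y \<in> S"
proof -
  have "(x,y) \<in> {(p,q). {p,q} \<in> E}\<^sup>*" using assms(1,4,5) by (auto simp: connected_graph_def)
  then show ?thesis
  proof (induction rule: rtrancl_induct)
    case base then show ?case using assms(2) by simp
  next
    case (step y z)
    then have "{y,z} \<in> E" "y \<in> S" by auto
    then show ?case using assms(3) by blast
  qed
qed

locale setting = thc +
  fixes V :: "'a set" and E :: "'a set set" and a b :: int
  assumes sg: "simple_graph V E" and conn: "connected_graph V E"
  and gab: "\<forall>w\<in>V. (\<Sum>q\<in>nbhd E w. int (deg E q)) = a * int (deg E w) + b - int (deg E w)^2"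
  and base: "is_base (V,E) (W,F)"
  and pend: "\<exists>x. pendant V E x"
begin

abbreviation "D w \<equiv> int (deg E w)"

lemma WV: "W \<subseteq> V" and Fe: "F = {e\<in>E. e \<subseteq> W}"
  using prune_inv[of V E "(W,F)"] base sg by (auto simp: is_base_def)

lemma nopend: "\<not> pendant W F x" using base by (auto simp: is_base_def)

lemma FE: "F \<subseteq> E" using Fe by auto

lemma finE: "finite (nbhd E w)" using nbhd_fin[OF sg] .

lemma nbhdE_V: "nbhd E w \<subseteq> V" using nbhd_sub[OF sg] .

lemma nbhdF_sub: "nbhd F w \<subseteq> nbhd E w" using FE unfolding nbhd_def by auto

lemma finF: "finite (nbhd F w)" using finE nbhdF_sub finite_subset by metis

lemma nbhdF_W: "nbhd F w \<subseteq> W" unfolding nbhd_def Fe by auto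

lemma degF_ge2: assumes "w \<in> W" shows "deg F w \<ge> 2"
proof -
  obtain q where "{q,w} \<in> F" using W_has_nbr[OF assms] by blast
  then have "nbhd F w \<noteq> {}" unfolding nbhd_def by auto
  then have "deg F w \<ge> 1" using finF unfolding deg_def by (simp add: Suc_leI card_gt_0_iff)
  moreover have "deg F w \<noteq> 1" using nopend assms unfolding pendant_def by auto
  ultimately show ?thesis by simp
qed

lemma degE_ge_F: "deg F w \<le> deg E w"
  unfolding deg_def using card_mono[OF finE nbhdF_sub] .

lemma degE_ge2: "w \<in> W \<Longrightarrow> D w \<ge> 2"
proof -
  assume "w \<in> W"
  then have "deg F w \<ge> 2" by (rule degF_ge2)
  then have "deg E w \<ge> 2" using degE_ge_F[of w] by linarith
  then show ?thesis by simp
qed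

lemma deg_pos: "q \<in> nbhd E w \<Longrightarrow> D q \<ge> 1"
proof -
  assume "q \<in> nbhd E w"
  then have "w \<in> nbhd E q" using nbhd_sym by metis
  then have "nbhd E q \<noteq> {}" by auto
  then show ?thesis using finE unfolding deg_def by (simp add: Suc_leI card_gt_0_iff)
qed

lemma leaf_nbr: "deg E x = 1 \<Longrightarrow> y \<in> nbhd E x \<Longrightarrow> nbhd E x = {y}"
proof -
  assume a: "deg E x = 1" "y \<in> nbhd E x"
  then have "\<exists>z. nbhd E x = {z}" unfolding deg_def by (simp add: card_1_singleton_iff)
  then obtain z where "nbhd E x = {z}" by blast
  then show ?thesis using a by auto
qed

lemma leaf_eq: assumes "x \<in> V" "deg E x = 1" "y \<in> nbhd E x" shows "D y = a + b - 1"
proof -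
  have "(\<Sum>q\<in>nbhd E x. D q) = a * D x + b - (D x)^2" using gab assms(1) by blast
  then show ?thesis using leaf_nbr[OF assms(2,3)] assms(2) by simp
qed

lemma u_W: "u \<in> W" unfolding Wd using c_facts by auto

lemma u_two: "c!1 \<in> nbhd E u" "last c \<in> nbhd E u" "c!1 \<noteq> last c" "c!1 \<in> W" "last c \<in> W"
  using u_nbhd u_nbr_facts nbhdF_sub by auto

lemma W_nonleaf: "w \<in> W \<Longrightarrow> deg E w \<noteq> 1" using degE_ge2 by fastforce

lemma edge_nbhd: "{p,q} \<in> E \<Longrightarrow> q \<in> nbhd E p \<and> p \<in> nbhd E q"
  unfolding nbhd_def by (simp add: insert_commute)

lemma noA: assumes y: "y \<in> V" "deg E y \<noteq> 1" "card {q\<in>nbhd E y. deg E q \<noteq> 1} \<le> 1"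
  shows False
proof -
  define NL where "NL = {q\<in>nbhd E y. deg E q \<noteq> 1}"
  have finNL: "finite NL" unfolding NL_def using finE by simp
  have uV: "u \<in> V" using u_W WV by auto
  have c1NL: "c!1 \<in> NL \<longleftrightarrow> c!1 \<in> nbhd E y" and clNL: "last c \<in> NL \<longleftrightarrow> last c \<in> nbhd E y"
    unfolding NL_def using W_nonleaf u_two by auto
  have "card NL = 0 \<or> card NL = 1" using y(3) unfolding NL_def by linarith
  then have "NL = {} \<or> (\<exists>z. NL = {z})" using finNL by (auto simp: card_1_singleton_iff)
  then consider "NL = {}" | z where "NL = {z}" by blast
  then show False
  proof cases
    case 1
    define S where "S = insert y (nbhd E y)"
    have leafs: "q \<in> nbhd E y \<Longrightarrow> deg E q = 1" for q using 1 unfolding NL_def by auto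
    have cl: "\<forall>p\<in>S. \<forall>q. {p,q} \<in> E \<longrightarrow> q \<in> S"
    proof (intro ballI allI impI)
      fix p q assume p: "p \<in> S" and e: "{p,q} \<in> E"
      show "q \<in> S"
      proof (cases "p = y")
        case True then show ?thesis using e edge_nbhd unfolding S_def by auto
      next
        case False
        then have py: "p \<in> nbhd E y" using p S_def by auto
        then have "y \<in> nbhd E p" using nbhd_sym by metis
        then have "nbhd E p = {y}" using leaf_nbr leafs[OF py] by metis
        then show ?thesis using e edge_nbhd unfolding S_def by auto
      qed
    qed
    have "u \<in> S" using closed_reach[OF conn _ cl y(1) uV] unfolding S_def by auto
    moreover have "u \<notin> nbhd E y" using leafs W_nonleaf u_W by auto
    ultimately have "u = y" unfolding S_def by auto
    then have "c!1 \<in> NL" using c1NL u_two by auto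
    then show False using 1 by auto
  next
    case (2 z)
    define LL where "LL = nbhd E y - {z}"
    have zN: "z \<in> nbhd E y" "deg E z \<noteq> 1" using 2 unfolding NL_def by auto
    have leafs: "q \<in> LL \<Longrightarrow> deg E q = 1" for q using 2 unfolding NL_def LL_def by auto
    have finLL: "finite LL" unfolding LL_def using finE by simp
    have ny: "nbhd E y = insert z LL" "z \<notin> LL" unfolding LL_def using zN by auto
    have degy: "deg E y = card LL + 1" unfolding deg_def using ny finLL by simp
    then have "LL \<noteq> {}" using y(2) by auto
    then obtain x where x: "x \<in> LL" by auto
    have xV: "x \<in> V" using x nbhdE_V unfolding LL_def by auto
    have "y \<in> nbhd E x" using x nbhd_sym unfolding LL_def by (metis DiffD1)
    then have Dy: "D y = a + b - 1" using leaf_eq[OF xV leafs[OF x]] by simp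
    define k where "k = D y"
    have "card LL > 0" using \<open>LL \<noteq> {}\<close> finLL by (simp add: card_gt_0_iff)
    then have k2: "k \<ge> 2" using degy k_def by simp
    have sLL: "(\<Sum>q\<in>LL. D q) = int (card LL)" using leafs by simp
    have ey0: "(\<Sum>q\<in>nbhd E y. D q) = a * k + b - k^2" using gab y(1) k_def by blast
    have ey: "(k-1) + D z = a*k + b - k^2"
    proof -
      have "(\<Sum>q\<in>nbhd E y. D q) = D z + (\<Sum>q\<in>LL. D q)" using ny finLL by simp
      then show ?thesis using ey0 sLL degy k_def by simp
    qed
    have zV: "z \<in> V" using zN nbhdE_V by auto
    have yz: "y \<in> nbhd E z" using zN nbhd_sym by metis
    define RR where "RR = nbhd E z - {y}"
    have finRR: "finite RR" unfolding RR_def using finE by simp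
    have nz: "nbhd E z = insert y RR" "y \<notin> RR" unfolding RR_def using yz by auto
    have degz: "deg E z = card RR + 1" unfolding deg_def using nz finRR by simp
    have ez0: "(\<Sum>q\<in>nbhd E z. D q) = a * D z + b - (D z)^2" using gab zV by blast
    have ez: "k + (\<Sum>q\<in>RR. D q) = a * D z + b - (D z)^2"
    proof -
      have "(\<Sum>q\<in>nbhd E z. D q) = D y + (\<Sum>q\<in>RR. D q)" using nz finRR by simp
      then show ?thesis using ez0 k_def by simp
    qed
    have RRge: "\<forall>q\<in>RR. D q \<ge> 1" using deg_pos unfolding RR_def by auto
    have "(\<Sum>q\<in>RR. D q) \<ge> (\<Sum>q\<in>RR. 1)" using RRge by (intro sum_mono) auto
    then have Rge: "(\<Sum>q\<in>RR. D q) \<ge> D z - 1" using degz by simp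
    have "(\<Sum>q\<in>RR. D q) = D z - 1"
      using caseA_arith[OF k2 _ ey ez Rge] Dy k_def degz by simp
    then have "(\<Sum>q\<in>RR. D q) = int (card RR)" using degz by simp
    then have leafz: "\<forall>q\<in>RR. D q = 1" using sum_all_one[OF finRR RRge] by simp
    define S where "S = {y,z} \<union> nbhd E y \<union> nbhd E z"
    have cl: "\<forall>p\<in>S. \<forall>q. {p,q} \<in> E \<longrightarrow> q \<in> S"
    proof (intro ballI allI impI)
      fix p q assume p: "p \<in> S" and e: "{p,q} \<in> E"
      have qp: "q \<in> nbhd E p" using e edge_nbhd by auto
      consider "p = y" | "p = z" | "p \<in> LL" | "p \<in> RR" using p unfolding S_def LL_def RR_def by auto
      then show "q \<in> S"
      proof cases
        case 1 then show ?thesis using qp S_def by auto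
      next
        case 2 then show ?thesis using qp S_def by auto
      next
        case 3
        have "y \<in> nbhd E p" using 3 nbhd_sym unfolding LL_def by (metis DiffD1)
        then have "nbhd E p = {y}" using leaf_nbr leafs[OF 3] by metis
        then show ?thesis using qp S_def by auto
      next
        case 4
        have "deg E p = 1" using leafz 4 by auto
        moreover have "z \<in> nbhd E p" using 4 nbhd_sym unfolding RR_def by (metis DiffD1)
        ultimately have "nbhd E p = {z}" using leaf_nbr by metis
        then show ?thesis using qp S_def by auto
      qed
    qed
    have "u \<in> S" using closed_reach[OF conn _ cl y(1) uV] unfolding S_def by auto
    moreover have "u \<notin> LL" using leafs W_nonleaf u_W by auto
    moreover have "u \<notin> RR" using leafz W_nonleaf u_W by fastforce
    ultimately have "u = y \<or> u = z" unfolding S_def LL_def RR_def by auto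
    then show False
    proof
      assume "u = y"
      then have "c!1 \<in> NL" "last c \<in> NL" using c1NL clNL u_two by auto
      then show False using 2 u_two by auto
    next
      assume "u = z"
      then have "c!1 \<notin> RR" "last c \<notin> RR" using leafz W_nonleaf u_two by fastforce+
      then have "c!1 = y" "last c = y" using \<open>u = z\<close> u_two nz by auto
      then show False using u_two by auto
    qed
  qed
qed

end



context setting begin

definition "K = a + b - 1"
definition "t = a - K - 1"
abbreviation "sig w \<equiv> (\<Sum>q\<in>nbhd F w. D q)"

lemma ab: "a = K + 1 + t" "b = -t" unfolding K_def t_def by simp_all

lemma X_W: "{w\<in>V. deg E w \<noteq> 1} \<subseteq> W"
proof -
  let ?X = "{w\<in>V. deg E w \<noteq> 1}"
  have "\<forall>x\<in>?X. 2 \<le> card {q\<in>?X. {q,x} \<in> E}"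
  proof
    fix x assume x: "x \<in> ?X"
    have eq: "{q\<in>?X. {q,x} \<in> E} = {q\<in>nbhd E x. deg E q \<noteq> 1}" using nbhdE_V unfolding nbhd_def by auto
    have "\<not> card {q\<in>nbhd E x. deg E q \<noteq> 1} \<le> 1" using noA[of x] x by auto
    then show "2 \<le> card {q\<in>?X. {q,x} \<in> E}" using eq by simp
  qed
  moreover have "?X \<subseteq> V" by auto
  ultimately show ?thesis using prune_keep[of V E "(W,F)" ?X] base sg by (auto simp: is_base_def)
qed

lemma notW_leaf: "w \<in> V \<Longrightarrow> w \<notin> W \<Longrightarrow> deg E w = 1" using X_W by auto

lemma VE: assumes "w \<in> W"
  shows "\<exists>l. l \<ge> 0 \<and> D w = int (deg F w) + l \<and> sig w + l = a * D w + b - (D w)^2 \<and> (l > 0 \<longrightarrow> D w = K)"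
proof -
  define L where "L = nbhd E w - W"
  have split: "nbhd E w = nbhd F w \<union> L"
  proof
    show "nbhd E w \<subseteq> nbhd F w \<union> L"
    proof
      fix q assume q: "q \<in> nbhd E w"
      show "q \<in> nbhd F w \<union> L"
      proof (cases "q \<in> W")
        case True
        then have "{q,w} \<in> F" using q assms unfolding Fe nbhd_def by auto
        then show ?thesis unfolding nbhd_def by auto
      next
        case False then show ?thesis using q L_def by auto
      qed
    qed
  next
    show "nbhd F w \<union> L \<subseteq> nbhd E w" using nbhdF_sub L_def by auto
  qed
  have disj: "nbhd F w \<inter> L = {}" using nbhdF_W L_def by auto
  have finL: "finite L" using finE L_def by simp
  have Lleaf: "q \<in> L \<Longrightarrow> deg E q = 1" for q using notW_leaf nbhdE_V L_def by auto
  have dw: "deg E w = deg F w + card L" unfolding deg_def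
    using split card_Un_disjoint[OF finF finL disj] by simp
  have sL: "(\<Sum>q\<in>L. D q) = int (card L)" using Lleaf by simp
  have sw: "(\<Sum>q\<in>nbhd E w. D q) = sig w + int (card L)"
  proof -
    have "(\<Sum>q\<in>nbhd E w. D q) = (\<Sum>q\<in>nbhd F w \<union> L. D q)" using split by simp
    also have "\<dots> = sig w + (\<Sum>q\<in>L. D q)" by (rule sum.union_disjoint[OF finF finL disj])
    finally show ?thesis using sL by simp
  qed
  have eq: "(\<Sum>q\<in>nbhd E w. D q) = a * D w + b - (D w)^2" using gab assms WV by auto
  have KK: "int (card L) > 0 \<longrightarrow> D w = K"
  proof
    assume "int (card L) > 0"
    then have "L \<noteq> {}" by auto
    then obtain q where q: "q \<in> L" by auto
    have qw: "q \<in> nbhd E w" using q L_def by auto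
    then have "w \<in> nbhd E q" using nbhd_sym by metis
    moreover have "q \<in> V" using qw nbhdE_V by auto
    moreover have "deg E q = 1" using Lleaf q by auto
    ultimately have "w \<in> nbhd E q" "q \<in> V" "deg E q = 1" by auto
    then show "D w = K" using leaf_eq K_def by simp
  qed
  show ?thesis using dw sw eq KK by (intro exI[of _ "int (card L)"]) simp
qed

lemma VEf: assumes "w \<in> W"
  shows "(D w = int (deg F w) \<and> sig w = a * int (deg F w) + b - (int (deg F w))^2)
    \<or> (D w = K \<and> K > int (deg F w) \<and> sig w = t*K - t + int (deg F w))"
proof -
  obtain l where "l \<ge> 0" "D w = int (deg F w) + l" "sig w + l = a * D w + b - (D w)^2" "l > 0 \<longrightarrow> D w = K"
    using VE[OF assms] by blast
  then show ?thesis using VE_form[OF K_def t_def] by blast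
qed

lemma sig_ge: "w \<in> W \<Longrightarrow> sig w \<ge> 2 * int (deg F w)"
proof -
  assume "w \<in> W"
  have "sig w \<ge> (\<Sum>q\<in>nbhd F w. 2)" using nbhdF_W degE_ge2 by (intro sum_mono) auto
  then show ?thesis unfolding deg_def by simp
qed

lemma Kt: "K \<ge> 3" "t \<ge> 1"
proof -
  obtain x where x: "pendant V E x" using pend by blast
  then have xV: "x \<in> V" "deg E x = 1" by (auto simp: pendant_def)
  then have "nbhd E x \<noteq> {}" unfolding deg_def by auto
  then obtain y where y: "y \<in> nbhd E x" by auto
  have yV: "y \<in> V" using y nbhdE_V by auto
  have xy: "x \<in> nbhd E y" using y nbhd_sym by metis
  have ynl: "deg E y \<noteq> 1"
  proof
    assume yl: "deg E y = 1"
    define S where "S = {x,y}"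
    have nx: "nbhd E x = {y}" using leaf_nbr[OF xV(2) y] .
    have ny: "nbhd E y = {x}" using leaf_nbr[OF yl xy] .
    have cl: "\<forall>p\<in>S. \<forall>q. {p,q} \<in> E \<longrightarrow> q \<in> S"
    proof (intro ballI allI impI)
      fix p q assume "p \<in> S" "{p,q} \<in> E"
      then have "q \<in> nbhd E p" "p = x \<or> p = y" using edge_nbhd S_def by auto
      then show "q \<in> S" using nx ny S_def by auto
    qed
    have "u \<in> S" using closed_reach[OF conn _ cl xV(1)] u_W WV S_def by auto
    then show False using xV(2) yl W_nonleaf u_W S_def by auto
  qed
  have yW: "y \<in> W" using X_W yV ynl by auto
  have xW: "x \<notin> W" using W_nonleaf xV by auto
  have Dy: "D y = K" using leaf_eq[OF xV y] K_def by simp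
  have sub: "insert x (nbhd F y) \<subseteq> nbhd E y" using xy nbhdF_sub by auto
  have "x \<notin> nbhd F y" using xW nbhdF_W by auto
  then have "card (insert x (nbhd F y)) = deg F y + 1" unfolding deg_def using finF by simp
  then have "deg F y + 1 \<le> deg E y" using card_mono[OF finE sub] unfolding deg_def by simp
  then have Dgt: "D y > int (deg F y)" by simp
  have b2: "int (deg F y) \<ge> 2" using degF_ge2[OF yW] by simp
  have sg2: "sig y \<ge> 2 * int (deg F y)" using sig_ge[OF yW] .
  have "D y = K \<and> K > int (deg F y) \<and> sig y = t*K - t + int (deg F y)" using VEf[OF yW] Dgt by auto
  then have e: "K > int (deg F y)" "(K - 1) * t = sig y - int (deg F y)" by (auto simp: algebra_simps)
  show K3: "K \<ge> 3" using e b2 by simp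
  show "t \<ge> 1"
  proof (rule ccontr)
    assume "\<not> t \<ge> 1"
    then have "t \<le> 0" by simp
    then have "(K-1)*t \<le> 0" using K3 by (simp add: mult_nonneg_nonpos)
    then show False using e sg2 b2 by simp
  qed
qed

end



context setting begin

lemma two_set: "x \<noteq> y \<Longrightarrow> nbhd F w = {x,y} \<Longrightarrow> int (deg F w) = 2 \<and> sig w = D x + D y"
  unfolding deg_def by simp

lemma VE2: assumes "w \<in> W" "int (deg F w) = 2"
  shows "(D w = 2 \<and> sig w = 2*K + t - 2) \<or> (D w = K \<and> sig w = t*K - t + 2)"
  using VEf[OF assms(1)] assms(2) ab by (auto simp: algebra_simps power2_eq_square)

lemma cyc_apply:
  assumes T: "thc u v p1 p2 p3 c' W F"
  shows "(t = 2 \<and> D u = K \<and> D (c'!1) = K) \<or> (length c' = 3 \<and> K = 6 \<and> t = 1 \<and> D u = 5 \<and> D (c'!1) + D (c'!2) = 8)"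
proof -
  interpret T: thc u v p1 p2 p3 c' W F by (rule T)
  have L3: "3 \<le> length c'" and c0: "c'!0 = u" using T.c_facts by auto
  have n1: "nbhd F (c'!1) = {u, c'!2}" using T.cyc_nbhd[of 1] L3 c0 by (simp add: numeral_2_eq_2)
  have ne1: "u \<noteq> c'!2" using T.cyc_nbr_facts(1)[of 1] L3 c0 by (simp add: numeral_2_eq_2)
  have w1: "c'!1 \<in> W" using T.cyc_nbr_facts(4)[of 1] L3 by simp
  have s1: "int (deg F (c'!1)) = 2" "sig (c'!1) = D u + D (c'!2)" using two_set[OF ne1 n1] by auto
  define z where "z = (if 3 < length c' then c'!3 else u)"
  have n2: "nbhd F (c'!2) = {c'!1, z}" using T.cyc_nbhd[of 2] L3 z_def by (simp add: numeral_3_eq_3)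
  have ne2r: "c'!(2-1) \<noteq> (if Suc 2 < length c' then c'!(Suc 2) else u)"
    by (rule T.cyc_nbr_facts(1)) (use L3 in auto)
  have nn: "Suc 2 = (3::nat)" "(2::nat) - 1 = 1" "Suc 3 = (4::nat)" "(3::nat) - 1 = 2" by simp_all
  have ne2: "c'!1 \<noteq> z" using ne2r unfolding nn z_def .
  have w2: "c'!2 \<in> W" using T.cyc_nbr_facts(4)[of 2] L3 by simp
  have s2: "int (deg F (c'!2)) = 2" "sig (c'!2) = D (c'!1) + D z" using two_set[OF ne2 n2] by auto
  have zc: "(D z = D u \<and> length c' = 3) \<or> D z = 2 \<or> D z = K"
  proof (cases "3 < length c'")
    case True
    then have zz: "z = c'!3" using z_def by simp
    have n3: "nbhd F (c'!3) = {c'!2, if 4 < length c' then c'!4 else u}"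
      using T.cyc_nbhd[of 3] True by (simp add: numeral_3_eq_3 numeral_Bit0)
    have ne3r: "c'!(3-1) \<noteq> (if Suc 3 < length c' then c'!(Suc 3) else u)"
      by (rule T.cyc_nbr_facts(1)) (use True in auto)
    have ne3: "c'!2 \<noteq> (if 4 < length c' then c'!4 else u)" using ne3r unfolding nn .
    have w3: "c'!3 \<in> W" using T.cyc_nbr_facts(4)[of 3] True by simp
    have "int (deg F (c'!3)) = 2" using two_set[OF ne3 n3] by auto
    then show ?thesis using VE2[OF w3] zz by auto
  next
    case False
    then show ?thesis using z_def L3 by auto
  qed
  have nu: "nbhd F u = {p1!1, p2!1, p3!1, c'!1, last c'}" by (rule T.u_nbhd)
  have du: "distinct [p1!1, p2!1, p3!1, c'!1, last c']" "set [p1!1, p2!1, p3!1, c'!1, last c'] \<subseteq> W"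
    using T.u_nbr_facts by auto
  have su: "int (deg F u) = 5" "sig u = D (p1!1) + D (p2!1) + D (p3!1) + D (c'!1) + D (last c')"
    using nu du(1) unfolding deg_def by (auto simp: algebra_simps)
  have uW: "u \<in> W" by (rule u_W)
  have "D (p1!1) \<ge> 2" "D (p2!1) \<ge> 2" "D (p3!1) \<ge> 2" using du(2) degE_ge2 by auto
  then have Xge: "D (p1!1) + D (p2!1) + D (p3!1) \<ge> 6" by linarith
  have dL: "D (last c') \<ge> 2" using du(2) degE_ge2 by auto
  have cu: "(D u = 5 \<and> D (c'!1) + D (last c') + (D (p1!1) + D (p2!1) + D (p3!1)) = 5*K + 4*t - 20)
      \<or> (D u = K \<and> K > 5 \<and> D (c'!1) + D (last c') + (D (p1!1) + D (p2!1) + D (p3!1)) = t*K - t + 5)"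
    using VEf[OF uW] su ab by (auto simp: algebra_simps power2_eq_square)
  have c1: "(D (c'!1) = 2 \<and> D u + D (c'!2) = 2*K + t - 2) \<or> (D (c'!1) = K \<and> D u + D (c'!2) = t*K - t + 2)"
    using VE2[OF w1 s1(1)] s1(2) by auto
  have c2: "(D (c'!2) = 2 \<and> D (c'!1) + D z = 2*K + t - 2) \<or> (D (c'!2) = K \<and> D (c'!1) + D z = t*K - t + 2)"
    using VE2[OF w2 s2(1)] s2(2) by auto
  show ?thesis
    using cycle_arith[OF Kt(1) Kt(2) c1 c2 cu dL Xge zc] by auto
qed

lemma degF_v: "int (deg F v) = 3" "v \<in> W"
proof -
  have "distinct [p1!(length p1 - 2), p2!(length p2 - 2), p3!(length p3 - 2)]" using v_nbr_facts by auto
  then show "int (deg F v) = 3" using v_nbhd unfolding deg_def by auto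
  show "v \<in> W" using p_facts(6)[OF PinP(1)] Wd by auto
qed

lemma Dv3: "D v \<ge> 3" using degF_v degE_ge_F[of v] by linarith

lemma path_61: assumes K6: "K = 6" and t1: "t = 1" and du: "D u = 5" and pP: "p \<in> P" and d1: "D (p!1) = 2"
  shows "length p = 3 \<and> D v = 6"
proof -
  have dp: "distinct p" "2 \<le> length p" "p!0 = u" "p!(length p - 1) = v" using p_facts[OF pP] by auto
  have l3: "length p \<ge> 3"
  proof (rule ccontr)
    assume "\<not> length p \<ge> 3"
    then have "length p = 2" using dp by simp
    then have "p!1 = v" using dp by simp
    then show False using d1 Dv3 by simp
  qed
  have n1: "nbhd F (p!1) = {u, p!2}" using path_nbhd[OF pP, of 1] l3 dp by (simp add: numeral_2_eq_2)
  have ne1: "u \<noteq> p!2" using path_nbr_facts(1)[OF pP, of 1] l3 dp by (simp add: numeral_2_eq_2)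
  have w1: "p!1 \<in> W" using path_nbr_facts(4)[OF pP, of 1] l3 by simp
  have s1: "int (deg F (p!1)) = 2" "sig (p!1) = D u + D (p!2)" using two_set[OF ne1 n1] by auto
  have D2: "D (p!2) = 6" using VE2[OF w1 s1(1)] s1(2) d1 du K6 t1 by auto
  have "length p = 3"
  proof (rule ccontr)
    assume "length p \<noteq> 3"
    then have l4: "length p \<ge> 4" using l3 by simp
    have n2: "nbhd F (p!2) = {p!1, p!3}" using path_nbhd[OF pP, of 2] l4 by (simp add: numeral_3_eq_3)
    have ne2: "p!1 \<noteq> p!3" using path_nbr_facts(1)[OF pP, of 2] l4 by (simp add: numeral_3_eq_3)
    have w2: "p!2 \<in> W" using path_nbr_facts(4)[OF pP, of 2] l4 by simp
    have s2: "int (deg F (p!2)) = 2" "sig (p!2) = D (p!1) + D (p!3)" using two_set[OF ne2 n2] by auto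
    have D3: "D (p!3) = 5" using VE2[OF w2 s2(1)] s2(2) d1 D2 K6 t1 by auto
    show False
    proof (cases "length p = 4")
      case True
      then have "p!3 = v" using dp by simp
      then show False using VEf[OF degF_v(2)] degF_v(1) D3 K6 by auto
    next
      case False
      then have l5: "length p \<ge> 5" using l4 by simp
      have n3: "nbhd F (p!3) = {p!2, p!4}" using path_nbhd[OF pP, of 3] l5 by (simp add: numeral_3_eq_3 numeral_Bit0)
      have ne3: "p!2 \<noteq> p!4" using path_nbr_facts(1)[OF pP, of 3] l5 by (simp add: numeral_3_eq_3 numeral_Bit0)
      have w3: "p!3 \<in> W" using path_nbr_facts(4)[OF pP, of 3] l5 by simp
      have "int (deg F (p!3)) = 2" using two_set[OF ne3 n3] by auto
      then show False using VE2[OF w3] D3 K6 by auto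
    qed
  qed
  moreover have "p!2 = v" using calculation dp by simp
  ultimately show ?thesis using D2 by simp
qed

lemma final: False
proof -
  have T: "thc u v p1 p2 p3 c W F" by unfold_locales
  have T': "thc u v p1 p2 p3 (u # rev (tl c)) W F" by (rule rev_thc)
  have ne: "tl c \<noteq> []" using c_facts by (cases c) auto
  have c'1: "(u # rev (tl c))!1 = last c"
  proof -
    have "(u # rev (tl c))!1 = hd (rev (tl c))" using ne by (simp add: hd_conv_nth)
    also have "\<dots> = last (tl c)" by (simp add: hd_rev)
    also have "\<dots> = last c" using ne by (cases c) auto
    finally show ?thesis .
  qed
  have uW: "u \<in> W" by (rule u_W)
  have nu: "nbhd F u = {p1!1, p2!1, p3!1, c!1, last c}" by (rule u_nbhd)
  have du: "distinct [p1!1, p2!1, p3!1, c!1, last c]" "set [p1!1, p2!1, p3!1, c!1, last c] \<subseteq> W"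
    using u_nbr_facts by auto
  have su: "int (deg F u) = 5" "sig u = D (p1!1) + D (p2!1) + D (p3!1) + D (c!1) + D (last c)"
    using nu du(1) unfolding deg_def by (auto simp: algebra_simps)
  have g1: "D (p1!1) \<ge> 2" "D (p2!1) \<ge> 2" "D (p3!1) \<ge> 2" using du(2) degE_ge2 by auto
  have cu: "(D u = 5 \<and> sig u = 5*K + 4*t - 20) \<or> (D u = K \<and> K > 5 \<and> sig u = t*K - t + 5)"
    using VEf[OF uW] su ab by (auto simp: algebra_simps power2_eq_square)
  from cyc_apply[OF T] show False
  proof
    assume h: "t = 2 \<and> D u = K \<and> D (c!1) = K"
    from cyc_apply[OF T'] have "D (last c) = K" using h c'1 by auto
    then show False using cu su h g1 by auto
  next
    assume h: "length c = 3 \<and> K = 6 \<and> t = 1 \<and> D u = 5 \<and> D (c!1) + D (c!2) = 8"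
    have "last c = c!2" using h c_facts by simp
    then have "D (p1!1) + D (p2!1) + D (p3!1) = 6" using cu su h by auto
    then have e: "D (p1!1) = 2" "D (p2!1) = 2" "D (p3!1) = 2" using g1 by auto
    have r1: "length p1 = 3 \<and> D v = 6" using path_61[OF _ _ _ PinP(1) e(1)] h by auto
    have r2: "length p2 = 3" using path_61[OF _ _ _ PinP(2) e(2)] h by auto
    have r3: "length p3 = 3" using path_61[OF _ _ _ PinP(3) e(3)] h by auto
    have "nbhd F v = {p1!1, p2!1, p3!1}" using v_nbhd r1 r2 r3 by simp
    moreover have "distinct [p1!1, p2!1, p3!1]" using du(1) by simp
    ultimately have "sig v = 6" using e by simp
    then show False using VEf[OF degF_v(2)] degF_v(1) r1 h by auto
  qed
qed

end

theorem proposition3: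
  fixes V :: "'a set" and E :: "'a set set" and W :: "'a set" and F :: "'a set set"
  assumes "tricyclic V E"
    and "\<exists>x. pendant V E x"
    and "is_base (V, E) (W, F)"
    and "theta_with_cycle_at_u W F"
  shows "\<forall>a b :: int. \<not> in_Gab V E a b"
proof (intro allI notI)
  fix a b :: int
  assume g: "in_Gab V E a b"
  obtain u v p1 p2 p3 c where h: "u \<noteq> v \<and>
       path_list u v p1 \<and> path_list u v p2 \<and> path_list u v p3 \<and>
       p1 \<noteq> p2 \<and> p1 \<noteq> p3 \<and> p2 \<noteq> p3 \<and>
       set p1 \<inter> set p2 = {u, v} \<and> set p1 \<inter> set p3 = {u, v} \<and> set p2 \<inter> set p3 = {u, v} \<and>
       cycle_list u c \<and> set c \<inter> (set p1 \<union> set p2 \<union> set p3) = {u} \<and>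
       W = set p1 \<union> set p2 \<union> set p3 \<union> set c \<and>
       F = walk_edges p1 \<union> walk_edges p2 \<union> walk_edges p3 \<union> cycle_edges c"
    using assms(4) unfolding theta_with_cycle_at_u_def by blast
  have th: "thc u v p1 p2 p3 c W F" using h by (intro thc.intro) auto
  have "setting u v p1 p2 p3 c W F V E a b"
    using th g assms(2,3) unfolding setting_def setting_axioms_def in_Gab_def by auto
  then show False by (rule setting.final)
qed



end
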